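(* Let $3\le k\le n$. The subgroup $VS_{k-1}^*$ of $VSPG_k$ is generated by the elements $\mu_{jk}$ for $1\le j\le k-1$ together with all reduced powers of the generators $\mu_{kj}$, $\gamma_{kj}$ and $\gamma_{jk}$ for $1\le j\le k-1$.
   Context: $VSPG_n$ is the group generated by $\{\mu_{ij},\gamma_{ij}\mid 1\le i\ne j\le n\}$ with defining relations (distinct letters denote distinct indices): $\mu_{ij}\mu_{ik}\mu_{jk}=\mu_{jk}\mu_{ik}\mu_{ij}$; $\mu_{ij}\mu_{ik}\gamma_{jk}=\gamma_{jk}\mu_{ik}\mu_{ij}$; $\gamma_{ij}\mu_{ik}\mu_{jk}=\mu_{jk}\mu_{ik}\gamma_{ij}$; $\mu_{ij}\gamma_{ji}=\gamma_{ij}\mu_{ji}$; $\mu_{ij}\mu_{kl}=\mu_{kl}\mu_{ij}$, $\gamma_{ij}\gamma_{kl}=\gamma_{kl}\gamma_{ij}$, $\mu_{ij}\gamma_{kl}=\gamma_{kl}\mu_{ij}$. For $k<n$, $VSPG_k$ is identified with the subgroup of $VSPG_n$ generated by $\mu_{ij},\gamma_{ij}$ with $i,j\le k$. For $2\le i\le n$, $VS_{i-1}$ is the subgroup generated by $\mu_{1i},\dots,\mu_{i-1,i},\mu_{i1},\dots,\mu_{i,i-1},\gamma_{1i},\dots,\gamma_{i-1,i},\gamma_{i1},\dots,\gamma_{i,i-1}$, and $VS_{i-1}^*$ is the normal closure of $VS_{i-1}$ in $VSPG_i$. Notation $a^b:=b^{-1}ab$. Reduced power of $\mu_{kj}$ ($1\le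 j\le k-1$): $\mu_{kj}^{w}$ where $w$ is the empty word or a reduced word (no adjacent mutually inverse letters) in $VSPG_{k-1}$ beginning with a nonzero power of some $\mu_{ij}$ or $\gamma_{ij}$ with $1\le i\le k-1$, $i\ne j$. Reduced powers of $\gamma_{kj},\gamma_{jk}$: $\gamma_{kj}^{w}$, $\gamma_{jk}^{w}$ where $w$ is the empty word or a reduced word in $VSPG_{k-1}$ beginning with a nonzero power of some $\gamma_{ij}$ or $\gamma_{ji}$ with $1\le i\le k-1$, $i\ne j$. *)

theory Defs
  imports "HOL-Algebra.Algebra"
begin

text \<open>Generators: Mu i j stands for mu_ij, Ga i j for gamma_ij.
  A letter is a generator together with a sign (True = the generator, False = its inverse).\<close>

datatype vgen = Mu nat nat | Ga nat nat

type_synonym vletter = "vgen \<times> bool"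
type_synonym vword = "vletter list"

definition flip :: "vletter \<Rightarrow> vletter" where
  "flip x = (fst x, \<not> snd x)"

definition inv_word :: "vword \<Rightarrow> vword" where
  "inv_word w = rev (map flip w)"

fun valid_gen :: "nat \<Rightarrow> vgen \<Rightarrow> bool" where
  "valid_gen m (Mu i j) = (1 \<le> i \<and> i \<le> m \<and> 1 \<le> j \<and> j \<le> m \<and> i \<noteq> j)"
| "valid_gen m (Ga i j) = (1 \<le> i \<and> i \<le> m \<and> 1 \<le> j \<and> j \<le> m \<and> i \<noteq> j)"

definition valid_word :: "nat \<Rightarrow> vword \<Rightarrow> bool" where
  "valid_word m w = (\<forall>x \<in> set w. valid_gen m (fst x))"

definition pos :: "vgen list \<Rightarrow> vword" where
  "pos gs = map (\<lambda>g. (g, True)) gs"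

inductive relator :: "nat \<Rightarrow> vword \<Rightarrow> vword \<Rightarrow> bool" for m where
  r1: "\<lbrakk>distinct [a,b,c]; set [a,b,c] \<subseteq> {1..m}\<rbrakk> \<Longrightarrow>
       relator m (pos [Mu a b, Mu a c, Mu b c]) (pos [Mu b c, Mu a c, Mu a b])"
| r2: "\<lbrakk>distinct [a,b,c]; set [a,b,c] \<subseteq> {1..m}\<rbrakk> \<Longrightarrow>
       relator m (pos [Mu a b, Mu a c, Ga b c]) (pos [Ga b c, Mu a c, Mu a b])"
| r3: "\<lbrakk>distinct [a,b,c]; set [a,b,c] \<subseteq> {1..m}\<rbrakk> \<Longrightarrow>
       relator m (pos [Ga a b, Mu a c, Mu b c]) (pos [Mu b c, Mu a c, Ga a b])"
| r4: "\<lbrakk>distinct [a,b]; set [a,b] \<subseteq> {1..m}\<rbrakk> \<Longrightarrow>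
       relator m (pos [Mu a b, Ga b a]) (pos [Ga a b, Mu b a])"
| r5: "\<lbrakk>distinct [a,b,c,d]; set [a,b,c,d] \<subseteq> {1..m}\<rbrakk> \<Longrightarrow>
       relator m (pos [Mu a b, Mu c d]) (pos [Mu c d, Mu a b])"
| r6: "\<lbrakk>distinct [a,b,c,d]; set [a,b,c,d] \<subseteq> {1..m}\<rbrakk> \<Longrightarrow>
       relator m (pos [Ga a b, Ga c d]) (pos [Ga c d, Ga a b])"
| r7: "\<lbrakk>distinct [a,b,c,d]; set [a,b,c,d] \<subseteq> {1..m}\<rbrakk> \<Longrightarrow>
       relator m (pos [Mu a b, Ga c d]) (pos [Ga c d, Mu a b])"

inductive weq :: "nat \<Rightarrow> vword \<Rightarrow> vword \<Rightarrow> bool" for m where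
  weq_refl: "weq m w w"
| weq_sym: "weq m u v \<Longrightarrow> weq m v u"
| weq_trans: "weq m u v \<Longrightarrow> weq m v w \<Longrightarrow> weq m u w"
| weq_cancel: "valid_gen m (fst x) \<Longrightarrow> weq m (u @ [x, flip x] @ v) (u @ v)"
| weq_rel: "relator m l r \<Longrightarrow> weq m (u @ l @ v) (u @ r @ v)"

definition wclass :: "nat \<Rightarrow> vword \<Rightarrow> vword set" where
  "wclass m w = {v. weq m w v}"

definition VSPG :: "nat \<Rightarrow> vword set monoid" where
  "VSPG m = \<lparr> carrier = {wclass m w | w. valid_word m w},
              monoid.mult = (\<lambda>A B. {v. \<exists>a\<in>A. \<exists>b\<in>B. weq m (a @ b) v}),
              one = wclass m [] \<rparr>"

definition normal_closure :: "('a, 'b) monoid_scheme \<Rightarrow> 'a set \<Rightarrow> 'a set" where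
  "normal_closure G H = \<Inter> {N. normal N G \<and> H \<subseteq> N}"

text \<open>VS_{i-1} as a subgroup of VSPG_i.\<close>
definition VS :: "nat \<Rightarrow> vword set set" where
  "VS i = generate (VSPG i)
     {wclass i [(g, True)] | g j. 1 \<le> j \<and> j \<le> i - 1 \<and>
        g \<in> {Mu j i, Mu i j, Ga j i, Ga i j}}"

definition VS_star :: "nat \<Rightarrow> vword set set" where
  "VS_star i = normal_closure (VSPG i) (VS i)"

definition reduced :: "vword \<Rightarrow> bool" where
  "reduced w = (\<forall>t. Suc t < length w \<longrightarrow> w ! Suc t \<noteq> flip (w ! t))"

definition conj_elt :: "nat \<Rightarrow> vgen \<Rightarrow> vword \<Rightarrow> vword set" where
  "conj_elt k g w = wclass k (inv_word w @ [(g, True)] @ w)"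

definition red_pow_mu :: "nat \<Rightarrow> nat \<Rightarrow> vword set set" where
  "red_pow_mu k j = {conj_elt k (Mu k j) w | w.
      w = [] \<or> (valid_word (k - 1) w \<and> reduced w \<and>
        (\<exists>i. 1 \<le> i \<and> i \<le> k - 1 \<and> i \<noteq> j \<and> fst (hd w) \<in> {Mu i j, Ga i j}))}"

definition red_pow_ga :: "nat \<Rightarrow> vgen \<Rightarrow> nat \<Rightarrow> vword set set" where
  "red_pow_ga k g j = {conj_elt k g w | w.
      w = [] \<or> (valid_word (k - 1) w \<and> reduced w \<and>
        (\<exists>i. 1 \<le> i \<and> i \<le> k - 1 \<and> i \<noteq> j \<and> fst (hd w) \<in> {Ga i j, Ga j i}))}"

end

theory Submission
  imports Defs
begin


lemma weq_cong: "weq m u v \<Longrightarrow> weq m (p @ u @ q) (p @ v @ q)"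
proof (induction rule: weq.induct)
  case (weq_refl w) show ?case by (rule weq.weq_refl)
next
  case (weq_sym u v) thus ?case by (blast intro: weq.weq_sym)
next
  case (weq_trans u v w) thus ?case by (metis weq.weq_trans)
next
  case (weq_cancel x u v)
  from weq.weq_cancel[OF weq_cancel, of "p @ u" "v @ q"] show ?case by simp
next
  case (weq_rel l r u v)
  from weq.weq_rel[OF weq_rel, of "p @ u" "v @ q"] show ?case by simp
qed

lemma weq_app: "weq m u u' \<Longrightarrow> weq m v v' \<Longrightarrow> weq m (u @ v) (u' @ v')"
proof -
  assume a: "weq m u u'" "weq m v v'"
  have "weq m ([] @ u @ v) ([] @ u' @ v)" by (rule weq_cong[OF a(1)])
  moreover have "weq m (u' @ v @ []) (u' @ v' @ [])" by (rule weq_cong[OF a(2)])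
  ultimately show ?thesis by (auto intro: weq.weq_trans)
qed

lemma wclass_eq: "wclass m u = wclass m v \<longleftrightarrow> weq m u v"
proof
  assume "wclass m u = wclass m v"
  then have "v \<in> wclass m u" by (simp add: wclass_def weq.weq_refl)
  then show "weq m u v" by (simp add: wclass_def)
next
  assume h: "weq m u v"
  show "wclass m u = wclass m v"
    unfolding wclass_def using h by (blast intro: weq.weq_trans weq.weq_sym)
qed

lemma wclass_eqI: "weq m u v \<Longrightarrow> wclass m u = wclass m v"
  using wclass_eq by blast

lemma VSPG_mult: "wclass m u \<otimes>\<^bsub>VSPG m\<^esub> wclass m v = wclass m (u @ v)"
  unfolding VSPG_def wclass_def
  by (auto intro: weq_app weq.weq_refl)
     (meson weq.weq_sym weq.weq_trans weq_app)

lemma VSPG_one: "\<one>\<^bsub>VSPG m\<^esub> = wclass m []"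
  by (simp add: VSPG_def)

lemma VSPG_carrier: "carrier (VSPG m) = {wclass m w | w. valid_word m w}"
  by (simp add: VSPG_def)

lemma flip_flip[simp]: "flip (flip x) = x"
  by (simp add: flip_def)

lemma fst_flip[simp]: "fst (flip x) = fst x"
  by (simp add: flip_def)

lemma inv_word_simps[simp]: "inv_word [] = []" "inv_word (x # w) = inv_word w @ [flip x]"
  "inv_word (u @ v) = inv_word v @ inv_word u" "inv_word (inv_word w) = w"
  by (simp_all add: inv_word_def rev_map comp_def)

lemma valid_word_simps[simp]: "valid_word m [] " "valid_word m (x # w) = (valid_gen m (fst x) \<and> valid_word m w)"
  "valid_word m (u @ v) = (valid_word m u \<and> valid_word m v)"
  "valid_word m (inv_word w) = valid_word m w"
  by (auto simp: valid_word_def inv_word_def)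

lemma weq_cancel': "valid_gen m (fst x) \<Longrightarrow> weq m (u @ x # flip x # v) (u @ v)"
  using weq.weq_cancel[of m x u v] by simp

lemma inv_cancel_r: "valid_word m w \<Longrightarrow> weq m (w @ inv_word w) []"
proof (induction w)
  case Nil then show ?case by (simp add: weq.weq_refl)
next
  case (Cons x w)
  have "weq m ([x] @ (w @ inv_word w) @ [flip x]) ([x] @ [] @ [flip x])"
    using Cons by (intro weq_cong) auto
  moreover have "weq m ([] @ x # flip x # []) ([] @ [])"
    using Cons by (intro weq_cancel') auto
  ultimately show ?case by (auto intro: weq.weq_trans)
qed

lemma inv_cancel_l: "valid_word m w \<Longrightarrow> weq m (inv_word w @ w) []"
  using inv_cancel_r[of m "inv_word w"] by simp

lemma VSPG_group: "group (VSPG m)"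
proof (rule groupI)
  fix x y assume "x \<in> carrier (VSPG m)" "y \<in> carrier (VSPG m)"
  then show "x \<otimes>\<^bsub>VSPG m\<^esub> y \<in> carrier (VSPG m)"
    by (auto simp: VSPG_carrier VSPG_mult)
next
  show "\<one>\<^bsub>VSPG m\<^esub> \<in> carrier (VSPG m)"
    by (auto simp: VSPG_carrier VSPG_one intro!: exI[of _ "[]"])
next
  fix x y z assume "x \<in> carrier (VSPG m)" "y \<in> carrier (VSPG m)" "z \<in> carrier (VSPG m)"
  then show "x \<otimes>\<^bsub>VSPG m\<^esub> y \<otimes>\<^bsub>VSPG m\<^esub> z = x \<otimes>\<^bsub>VSPG m\<^esub> (y \<otimes>\<^bsub>VSPG m\<^esub> z)"
    by (auto simp: VSPG_carrier VSPG_mult)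
next
  fix x assume "x \<in> carrier (VSPG m)"
  then show "\<one>\<^bsub>VSPG m\<^esub> \<otimes>\<^bsub>VSPG m\<^esub> x = x"
    by (auto simp: VSPG_carrier VSPG_mult VSPG_one)
next
  fix x assume "x \<in> carrier (VSPG m)"
  then obtain w where w: "x = wclass m w" "valid_word m w" by (auto simp: VSPG_carrier)
  show "\<exists>y\<in>carrier (VSPG m). y \<otimes>\<^bsub>VSPG m\<^esub> x = \<one>\<^bsub>VSPG m\<^esub>"
  proof (intro bexI)
    show "wclass m (inv_word w) \<otimes>\<^bsub>VSPG m\<^esub> x = \<one>\<^bsub>VSPG m\<^esub>"
      using w inv_cancel_l[OF w(2)] by (simp add: VSPG_mult VSPG_one wclass_eqI)
    show "wclass m (inv_word w) \<in> carrier (VSPG m)" using w by (auto simp: VSPG_carrier)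
  qed
qed

lemma wclass_carrier: "valid_word m w \<Longrightarrow> wclass m w \<in> carrier (VSPG m)"
  by (auto simp: VSPG_carrier)

lemma VSPG_inv: "valid_word m w \<Longrightarrow> inv\<^bsub>VSPG m\<^esub> (wclass m w) = wclass m (inv_word w)"
proof -
  assume v: "valid_word m w"
  interpret group "VSPG m" by (rule VSPG_group)
  have "wclass m (inv_word w) \<otimes>\<^bsub>VSPG m\<^esub> wclass m w = \<one>\<^bsub>VSPG m\<^esub>"
    using inv_cancel_l[OF v] by (simp add: VSPG_mult VSPG_one wclass_eq)
  then show ?thesis using v
    by (metis inv_equality valid_word_simps(4) wclass_carrier)
qed



lemma (in group) cancel_aux[simp]:
  assumes "x \<in> carrier G" "y \<in> carrier G"
  shows "inv x \<otimes> (x \<otimes> y) = y" "x \<otimes> (inv x \<otimes> y) = y"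
  using assms by (simp_all add: m_assoc[symmetric])

lemma (in group) P1:
  assumes c: "x \<in> carrier G" "y \<in> carrier G" "g \<in> carrier G"
    and e: "x \<otimes> y \<otimes> g = g \<otimes> y \<otimes> x"
  shows "inv g \<otimes> x \<otimes> g = y \<otimes> x \<otimes> inv (inv g \<otimes> y \<otimes> g)"
    and "g \<otimes> x \<otimes> inv g = inv (g \<otimes> y \<otimes> inv g) \<otimes> x \<otimes> y"
proof -
  have "inv g \<otimes> x \<otimes> g = inv g \<otimes> (x \<otimes> y \<otimes> g) \<otimes> inv (inv g \<otimes> y \<otimes> g)"
    using c by (simp add: m_assoc inv_mult_group)
  also have "\<dots> = inv g \<otimes> (g \<otimes> y \<otimes> x) \<otimes> inv (inv g \<otimes> y \<otimes> g)" using e by simp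
  also have "\<dots> = y \<otimes> x \<otimes> inv (inv g \<otimes> y \<otimes> g)"
    using c by (simp add: m_assoc[symmetric])
  finally show "inv g \<otimes> x \<otimes> g = y \<otimes> x \<otimes> inv (inv g \<otimes> y \<otimes> g)" .
  have "g \<otimes> x \<otimes> inv g = inv (g \<otimes> y \<otimes> inv g) \<otimes> (g \<otimes> (y \<otimes> x) \<otimes> inv g)"
    using c by (simp add: m_assoc inv_mult_group)
  also have "g \<otimes> (y \<otimes> x) \<otimes> inv g = x \<otimes> y"
  proof -
    have "g \<otimes> (y \<otimes> x) \<otimes> inv g = (g \<otimes> y \<otimes> x) \<otimes> inv g" using c by (simp add: m_assoc)
    also have "\<dots> = (x \<otimes> y \<otimes> g) \<otimes> inv g" using e by simp
    also have "\<dots> = x \<otimes> y" using c by (simp add: m_assoc)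
    finally show ?thesis .
  qed
  finally show "g \<otimes> x \<otimes> inv g = inv (g \<otimes> y \<otimes> inv g) \<otimes> x \<otimes> y"
    using c by (simp add: m_assoc)
qed

lemma (in group) P2:
  assumes c: "x \<in> carrier G" "y \<in> carrier G" "g \<in> carrier G"
    and e: "x \<otimes> g \<otimes> y = y \<otimes> g \<otimes> x"
  shows "inv g \<otimes> x \<otimes> g = (inv g \<otimes> y \<otimes> g) \<otimes> x \<otimes> inv y"
    and "g \<otimes> x \<otimes> inv g = inv y \<otimes> x \<otimes> (g \<otimes> y \<otimes> inv g)"
proof -
  have "inv g \<otimes> x \<otimes> g = inv g \<otimes> (x \<otimes> g \<otimes> y) \<otimes> inv y"
    using c by (simp add: m_assoc)
  also have "\<dots> = inv g \<otimes> (y \<otimes> g \<otimes> x) \<otimes> inv y" using e by simp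
  also have "\<dots> = (inv g \<otimes> y \<otimes> g) \<otimes> x \<otimes> inv y"
    using c by (simp add: m_assoc)
  finally show "inv g \<otimes> x \<otimes> g = (inv g \<otimes> y \<otimes> g) \<otimes> x \<otimes> inv y" .
  have "g \<otimes> x \<otimes> inv g = inv y \<otimes> (y \<otimes> g \<otimes> x) \<otimes> inv g"
    using c by (simp add: m_assoc[symmetric])
  also have "\<dots> = inv y \<otimes> (x \<otimes> g \<otimes> y) \<otimes> inv g" using e by simp
  also have "\<dots> = inv y \<otimes> x \<otimes> (g \<otimes> y \<otimes> inv g)"
    using c by (simp add: m_assoc)
  finally show "g \<otimes> x \<otimes> inv g = inv y \<otimes> x \<otimes> (g \<otimes> y \<otimes> inv g)" .
qed

lemma (in group) P3:
  assumes c: "x \<in> carrier G" "u \<in> carrier G" "v \<in> carrier G" "z \<in> carrier G" "g \<in> carrier G"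
    and e: "x \<otimes> z = u \<otimes> v"
  shows "inv g \<otimes> x \<otimes> g = (inv g \<otimes> u \<otimes> g) \<otimes> (inv g \<otimes> v \<otimes> g) \<otimes> inv (inv g \<otimes> z \<otimes> g)"
    and "g \<otimes> x \<otimes> inv g = (g \<otimes> u \<otimes> inv g) \<otimes> (g \<otimes> v \<otimes> inv g) \<otimes> inv (g \<otimes> z \<otimes> inv g)"
proof -
  have x: "x = u \<otimes> v \<otimes> inv z" using c e
    by (metis inv_solve_right m_closed)
  show "inv g \<otimes> x \<otimes> g = (inv g \<otimes> u \<otimes> g) \<otimes> (inv g \<otimes> v \<otimes> g) \<otimes> inv (inv g \<otimes> z \<otimes> g)"
    unfolding x using c by (simp add: m_assoc inv_mult_group)
  show "g \<otimes> x \<otimes> inv g = (g \<otimes> u \<otimes> inv g) \<otimes> (g \<otimes> v \<otimes> inv g) \<otimes> inv (g \<otimes> z \<otimes> inv g)"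
    unfolding x using c by (simp add: m_assoc inv_mult_group)
qed

lemma (in group) P4:
  assumes c: "x \<in> carrier G" "g \<in> carrier G" and e: "g \<otimes> x = x \<otimes> g"
  shows "inv g \<otimes> x \<otimes> g = x" and "g \<otimes> x \<otimes> inv g = x"
proof -
  show "inv g \<otimes> x \<otimes> g = x" using c by (simp add: m_assoc e[symmetric])
  have "g \<otimes> x \<otimes> inv g = x \<otimes> g \<otimes> inv g" using e by simp
  then show "g \<otimes> x \<otimes> inv g = x" using c by (simp add: m_assoc)
qed



definition e :: "nat \<Rightarrow> vgen \<Rightarrow> vword set" where
  "e k g = wclass k [(g, True)]"

definition Sset :: "nat \<Rightarrow> vword set set" where
  "Sset k = ({wclass k [(Mu j k, True)] | j. 1 \<le> j \<and> j \<le> k - 1}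
            \<union> (\<Union>j\<in>{1..k-1}. red_pow_mu k j \<union> red_pow_ga k (Ga k j) j \<union> red_pow_ga k (Ga j k) j))"

lemma valid_gen_mono: "m \<le> m' \<Longrightarrow> valid_gen m g \<Longrightarrow> valid_gen m' g"
  by (cases g) auto

lemma valid_word_mono: "m \<le> m' \<Longrightarrow> valid_word m w \<Longrightarrow> valid_word m' w"
  using valid_gen_mono unfolding valid_word_def by blast

locale vs =
  fixes k :: nat
  assumes k3: "3 \<le> k"
begin

abbreviation mm (infixl "\<diamondop>" 70) where "x \<diamondop> y \<equiv> x \<otimes>\<^bsub>VSPG k\<^esub> y"
abbreviation ii where "ii x \<equiv> inv\<^bsub>VSPG k\<^esub> x"
abbreviation "H \<equiv> generate (VSPG k) (Sset k)"
abbreviation "C \<equiv> carrier (VSPG k)"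

sublocale G: group "VSPG k" by (rule VSPG_group)

lemma e_carrier[simp]: "valid_gen k g \<Longrightarrow> e k g \<in> C"
  unfolding e_def by (rule wclass_carrier) simp

lemma e_inv: "valid_gen k g \<Longrightarrow> ii (e k g) = wclass k [(g, False)]"
  unfolding e_def by (subst VSPG_inv) (auto simp: flip_def)

lemma rel3: "relator k (pos [a,b,c]) (pos [d,f,h]) \<Longrightarrow> e k a \<diamondop> e k b \<diamondop> e k c = e k d \<diamondop> e k f \<diamondop> e k h"
  using weq.weq_rel[of k "pos [a,b,c]" "pos [d,f,h]" "[]" "[]"]
  by (simp add: e_def VSPG_mult pos_def wclass_eqI)

lemma rel2: "relator k (pos [a,b]) (pos [c,d]) \<Longrightarrow> e k a \<diamondop> e k b = e k c \<diamondop> e k d"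
  using weq.weq_rel[of k "pos [a,b]" "pos [c,d]" "[]" "[]"]
  by (simp add: e_def VSPG_mult pos_def wclass_eqI)

lemma conj_pos: "valid_gen k g \<Longrightarrow> conj_elt k x [(g, True)] = ii (e k g) \<diamondop> e k x \<diamondop> e k g"
  by (simp add: e_inv[unfolded e_def] conj_elt_def e_def VSPG_mult flip_def)

lemma conj_neg: "valid_gen k g \<Longrightarrow> conj_elt k x [(g, False)] = e k g \<diamondop> e k x \<diamondop> ii (e k g)"
  by (simp add: e_inv[unfolded e_def] conj_elt_def e_def VSPG_mult flip_def)

lemma conj_nil: "conj_elt k x [] = e k x"
  by (simp add: conj_elt_def e_def)

lemma x_valid: "1 \<le> j \<Longrightarrow> j \<le> k - 1 \<Longrightarrow> valid_gen k (Mu k j) \<and> valid_gen k (Mu j k) \<and> valid_gen k (Ga k j) \<and> valid_gen k (Ga j k)"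
  using k3 by auto

lemma S_cases:
  assumes "s \<in> Sset k"
  obtains (A) j where "1 \<le> j" "j \<le> k - 1" "s = e k (Mu j k)"
  | (B) j w x where "1 \<le> j" "j \<le> k - 1" "s = conj_elt k x w" "x \<in> {Mu k j, Ga k j, Ga j k}"
      "valid_word (k-1) w"
proof -
  from assms consider (a) "s \<in> {wclass k [(Mu j k, True)] | j. 1 \<le> j \<and> j \<le> k - 1}"
    | (b) j where "j \<in> {1..k-1}" "s \<in> red_pow_mu k j"
    | (c) j where "j \<in> {1..k-1}" "s \<in> red_pow_ga k (Ga k j) j"
    | (d) j where "j \<in> {1..k-1}" "s \<in> red_pow_ga k (Ga j k) j"
    unfolding Sset_def by blast
  then show ?thesis
  proof cases
    case a then show ?thesis using that(1) unfolding e_def by blast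
  next
    case (b j)
    then obtain w where "s = conj_elt k (Mu k j) w" "valid_word (k-1) w"
      unfolding red_pow_mu_def by auto
    then show ?thesis using that(2)[of j "Mu k j" w] b by auto
  next
    case (c j)
    then obtain w where "s = conj_elt k (Ga k j) w" "valid_word (k-1) w"
      unfolding red_pow_ga_def by auto
    then show ?thesis using that(2)[of j "Ga k j" w] c by auto
  next
    case (d j)
    then obtain w where "s = conj_elt k (Ga j k) w" "valid_word (k-1) w"
      unfolding red_pow_ga_def by auto
    then show ?thesis using that(2)[of j "Ga j k" w] d by auto
  qed
qed

lemma S_carrier: "Sset k \<subseteq> C"
proof
  fix s assume s: "s \<in> Sset k"
  have cv: "\<And>x w. valid_gen k x \<Longrightarrow> valid_word (k-1) w \<Longrightarrow> conj_elt k x w \<in> C"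
  proof -
    fix x w assume a: "valid_gen k x" "valid_word (k-1) w"
    have "valid_word k w" using valid_word_mono[of "k-1" k w] a(2) by simp
    then have "valid_word k (inv_word w @ [(x, True)] @ w)" using a(1) by simp
    then show "conj_elt k x w \<in> C" unfolding conj_elt_def by (rule wclass_carrier)
  qed
  from s show "s \<in> C"
  proof (cases rule: S_cases)
    case (A j) then show ?thesis using x_valid by simp
  next
    case (B j w x)
    then have "valid_gen k x" using x_valid[of j] by blast
    then show ?thesis using B cv by simp
  qed
qed

lemma H_sub: "subgroup H (VSPG k)"
  by (rule G.generate_is_subgroup[OF S_carrier])

lemma hm: "a \<in> H \<Longrightarrow> b \<in> H \<Longrightarrow> a \<diamondop> b \<in> H"
  by (rule subgroup.m_closed[OF H_sub])

lemma hi: "a \<in> H \<Longrightarrow> ii a \<in> H"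
  by (rule subgroup.m_inv_closed[OF H_sub])

lemma hS: "s \<in> Sset k \<Longrightarrow> s \<in> H"
  by (rule generate.incl)

lemma S_A: "1 \<le> j \<Longrightarrow> j \<le> k - 1 \<Longrightarrow> e k (Mu j k) \<in> Sset k"
  unfolding Sset_def e_def by (rule UnI1) blast

lemma S_mu: "1 \<le> j \<Longrightarrow> j \<le> k - 1 \<Longrightarrow> s \<in> red_pow_mu k j \<Longrightarrow> s \<in> Sset k"
  unfolding Sset_def by (rule UnI2, rule UN_I[of j]) auto

lemma S_ga1: "1 \<le> j \<Longrightarrow> j \<le> k - 1 \<Longrightarrow> s \<in> red_pow_ga k (Ga k j) j \<Longrightarrow> s \<in> Sset k"
  unfolding Sset_def by (rule UnI2, rule UN_I[of j]) auto

lemma S_ga2: "1 \<le> j \<Longrightarrow> j \<le> k - 1 \<Longrightarrow> s \<in> red_pow_ga k (Ga j k) j \<Longrightarrow> s \<in> Sset k"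
  unfolding Sset_def by (rule UnI2, rule UN_I[of j]) auto

lemma H_base: assumes "1 \<le> j" "j \<le> k - 1"
  shows "e k (Mu j k) \<in> H" "e k (Mu k j) \<in> H" "e k (Ga k j) \<in> H" "e k (Ga j k) \<in> H"
proof -
  show "e k (Mu j k) \<in> H" using assms by (intro hS S_A)
  have "conj_elt k (Mu k j) [] \<in> red_pow_mu k j" unfolding red_pow_mu_def by blast
  then show "e k (Mu k j) \<in> H" using assms S_mu hS by (simp add: conj_nil)
  have "conj_elt k (Ga k j) [] \<in> red_pow_ga k (Ga k j) j" unfolding red_pow_ga_def by blast
  then show "e k (Ga k j) \<in> H" using assms S_ga1 hS by (simp add: conj_nil)
  have "conj_elt k (Ga j k) [] \<in> red_pow_ga k (Ga j k) j" unfolding red_pow_ga_def by blast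
  then show "e k (Ga j k) \<in> H" using assms S_ga2 hS by (simp add: conj_nil)
qed

definition CJ :: "vgen \<Rightarrow> vgen \<Rightarrow> bool" where
  "CJ x g \<longleftrightarrow> ii (e k g) \<diamondop> e k x \<diamondop> e k g \<in> H \<and> e k g \<diamondop> e k x \<diamondop> ii (e k g) \<in> H"

lemma reduced_single: "reduced [l]"
  by (simp add: reduced_def)

lemma adm_mu: assumes "1 \<le> j" "j \<le> k - 1" "1 \<le> i" "i \<le> k - 1" "i \<noteq> j" "g \<in> {Mu i j, Ga i j}"
  shows "CJ (Mu k j) g"
proof -
  have vg: "valid_gen k g" "valid_gen (k-1) g" using assms by auto
  have "conj_elt k (Mu k j) [(g, b)] \<in> red_pow_mu k j" for b
    unfolding red_pow_mu_def using assms vg reduced_single[of "(g,b)"]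
    by (auto simp: valid_word_def)
  then have "conj_elt k (Mu k j) [(g, b)] \<in> H" for b
    using assms S_mu hS by blast
  then show ?thesis unfolding CJ_def using conj_pos[OF vg(1)] conj_neg[OF vg(1)] by metis
qed

lemma adm_ga: assumes "1 \<le> j" "j \<le> k - 1" "1 \<le> i" "i \<le> k - 1" "i \<noteq> j" "g \<in> {Ga i j, Ga j i}"
    "x \<in> {Ga k j, Ga j k}"
  shows "CJ x g"
proof -
  have vg: "valid_gen k g" "valid_gen (k-1) g" using assms by auto
  have "conj_elt k x [(g, b)] \<in> red_pow_ga k x j" for b
    unfolding red_pow_ga_def using assms vg reduced_single[of "(g,b)"]
    by (auto simp: valid_word_def)
  then have "conj_elt k x [(g, b)] \<in> H" for b
    using assms S_ga1 S_ga2 hS by blast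
  then show ?thesis unfolding CJ_def using conj_pos[OF vg(1)] conj_neg[OF vg(1)] by metis
qed


lemma viaP1: assumes "valid_gen k x" "valid_gen k y" "valid_gen k g"
  "e k x \<diamondop> e k y \<diamondop> e k g = e k g \<diamondop> e k y \<diamondop> e k x" "e k x \<in> H" "e k y \<in> H" "CJ y g"
  shows "CJ x g"
  using G.P1[OF e_carrier[OF assms(1)] e_carrier[OF assms(2)] e_carrier[OF assms(3)] assms(4)]
    assms(5-7) unfolding CJ_def by (metis hm hi)

lemma viaP2: assumes "valid_gen k x" "valid_gen k y" "valid_gen k g"
  "e k x \<diamondop> e k g \<diamondop> e k y = e k y \<diamondop> e k g \<diamondop> e k x" "e k x \<in> H" "e k y \<in> H" "CJ y g"
  shows "CJ x g"
  using G.P2[OF e_carrier[OF assms(1)] e_carrier[OF assms(2)] e_carrier[OF assms(3)] assms(4)]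
    assms(5-7) unfolding CJ_def by (metis hm hi)

lemma viaP3: assumes "valid_gen k x" "valid_gen k u" "valid_gen k v" "valid_gen k z" "valid_gen k g"
  "e k x \<diamondop> e k z = e k u \<diamondop> e k v" "CJ u g" "CJ v g" "CJ z g"
  shows "CJ x g"
  using G.P3[OF e_carrier[OF assms(1)] e_carrier[OF assms(2)] e_carrier[OF assms(3)]
     e_carrier[OF assms(4)] e_carrier[OF assms(5)] assms(6)]
    assms(7-9) unfolding CJ_def by (metis hm hi)

lemma viaP4: assumes "valid_gen k x" "valid_gen k g"
  "e k g \<diamondop> e k x = e k x \<diamondop> e k g" "e k x \<in> H"
  shows "CJ x g"
  using G.P4[OF e_carrier[OF assms(1)] e_carrier[OF assms(2)] assms(3)] assms(4)
  unfolding CJ_def by simp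

context
  fixes j a
  assumes j: "1 \<le> j" "j \<le> k - 1" and a: "1 \<le> a" "a \<le> k - 1" and ja: "a \<noteq> j"
begin

lemma kk: "j < k" "a < k" "j \<noteq> k" "a \<noteq> k" "k \<noteq> j" "k \<noteq> a" "1 \<le> k"
  using j a k3 by auto

lemma C1: "CJ (Mu k j) (Mu j a)"
proof (rule viaP1[where y = "Mu k a"])
  show "e k (Mu k j) \<diamondop> e k (Mu k a) \<diamondop> e k (Mu j a) = e k (Mu j a) \<diamondop> e k (Mu k a) \<diamondop> e k (Mu k j)"
    by (rule rel3, rule relator.r1) (use j a ja kk in auto)
  show "CJ (Mu k a) (Mu j a)" by (rule adm_mu) (use j a ja in auto)
qed (use j a ja kk H_base in auto)

lemma C2: "CJ (Mu k j) (Ga j a)"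
proof (rule viaP1[where y = "Mu k a"])
  show "e k (Mu k j) \<diamondop> e k (Mu k a) \<diamondop> e k (Ga j a) = e k (Ga j a) \<diamondop> e k (Mu k a) \<diamondop> e k (Mu k j)"
    by (rule rel3, rule relator.r2) (use j a ja kk in auto)
  show "CJ (Mu k a) (Ga j a)" by (rule adm_mu) (use j a ja in auto)
qed (use j a ja kk H_base in auto)

lemma C3: "CJ (Ga k j) (Mu j a)"
proof (rule viaP1[where y = "Mu k a"])
  show "e k (Ga k j) \<diamondop> e k (Mu k a) \<diamondop> e k (Mu j a) = e k (Mu j a) \<diamondop> e k (Mu k a) \<diamondop> e k (Ga k j)"
    by (rule rel3, rule relator.r3) (use j a ja kk in auto)
  show "CJ (Mu k a) (Mu j a)" by (rule adm_mu) (use j a ja in auto)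
qed (use j a ja kk H_base in auto)

lemma C5: "CJ (Ga j k) (Mu j a)"
proof (rule viaP2[where y = "Mu k a"])
  show "e k (Ga j k) \<diamondop> e k (Mu j a) \<diamondop> e k (Mu k a) = e k (Mu k a) \<diamondop> e k (Mu j a) \<diamondop> e k (Ga j k)"
    by (rule rel3, rule relator.r3) (use j a ja kk in auto)
  show "CJ (Mu k a) (Mu j a)" by (rule adm_mu) (use j a ja in auto)
qed (use j a ja kk H_base in auto)

lemma C7: "CJ (Mu j k) (Mu j a)"
proof (rule viaP2[where y = "Mu k a"])
  show "e k (Mu j k) \<diamondop> e k (Mu j a) \<diamondop> e k (Mu k a) = e k (Mu k a) \<diamondop> e k (Mu j a) \<diamondop> e k (Mu j k)"
    by (rule rel3, rule relator.r1) (use j a ja kk in auto)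
  show "CJ (Mu k a) (Mu j a)" by (rule adm_mu) (use j a ja in auto)
qed (use j a ja kk H_base in auto)

lemma C9: "g \<in> {Ga a j, Ga j a} \<Longrightarrow> CJ (Mu j k) g"
proof (rule viaP3[where u = "Ga j k" and v = "Mu k j" and z = "Ga k j"])
  assume g: "g \<in> {Ga a j, Ga j a}"
  show "e k (Mu j k) \<diamondop> e k (Ga k j) = e k (Ga j k) \<diamondop> e k (Mu k j)"
    by (rule rel2, rule relator.r4) (use j a ja kk in auto)
  show "CJ (Ga j k) g" by (rule adm_ga[of j a]) (use j a ja g in auto)
  show "CJ (Ga k j) g" by (rule adm_ga[of j a]) (use j a ja g in auto)
  show "CJ (Mu k j) g"
  proof (cases "g = Ga j a")
    case True then show ?thesis using C2 by simp
  next
    case False then show ?thesis by (intro adm_mu[of j a]) (use j a ja g in auto)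
  qed
  show "valid_gen k g" using g j a ja kk by auto
qed (use j a ja kk in auto)

end

context
  fixes j a
  assumes j: "1 \<le> j" "j \<le> k - 1" and a: "1 \<le> a" "a \<le> k - 1" and ja: "a \<noteq> j"
begin

lemma kk2: "j < k" "a < k" "j \<noteq> k" "a \<noteq> k" "k \<noteq> j" "k \<noteq> a" "1 \<le> k"
  using j a k3 by auto

lemma D1: "CJ (Mu a k) (Mu a j)"
  by (rule C7) (use j a ja in auto)

lemma C4: "CJ (Ga k j) (Mu a j)"
proof (rule viaP2[where y = "Mu a k"])
  have "e k (Mu a k) \<diamondop> e k (Mu a j) \<diamondop> e k (Ga k j) = e k (Ga k j) \<diamondop> e k (Mu a j) \<diamondop> e k (Mu a k)"
    by (rule rel3, rule relator.r2) (use j a ja kk2 in auto)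
  then show "e k (Ga k j) \<diamondop> e k (Mu a j) \<diamondop> e k (Mu a k) = e k (Mu a k) \<diamondop> e k (Mu a j) \<diamondop> e k (Ga k j)"
    by simp
qed (use j a ja kk2 H_base D1 in auto)

lemma C6: "CJ (Ga j k) (Mu a j)"
proof (rule viaP1[where y = "Mu a k"])
  have "e k (Mu a j) \<diamondop> e k (Mu a k) \<diamondop> e k (Ga j k) = e k (Ga j k) \<diamondop> e k (Mu a k) \<diamondop> e k (Mu a j)"
    by (rule rel3, rule relator.r2) (use j a ja kk2 in auto)
  then show "e k (Ga j k) \<diamondop> e k (Mu a k) \<diamondop> e k (Mu a j) = e k (Mu a j) \<diamondop> e k (Mu a k) \<diamondop> e k (Ga j k)"
    by simp
qed (use j a ja kk2 H_base D1 in auto)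

lemma C8: "CJ (Mu j k) (Mu a j)"
proof (rule viaP1[where y = "Mu a k"])
  have "e k (Mu a j) \<diamondop> e k (Mu a k) \<diamondop> e k (Mu j k) = e k (Mu j k) \<diamondop> e k (Mu a k) \<diamondop> e k (Mu a j)"
    by (rule rel3, rule relator.r1) (use j a ja kk2 in auto)
  then show "e k (Mu j k) \<diamondop> e k (Mu a k) \<diamondop> e k (Mu a j) = e k (Mu a j) \<diamondop> e k (Mu a k) \<diamondop> e k (Mu j k)"
    by simp
qed (use j a ja kk2 H_base D1 in auto)

end


lemma comm: assumes j: "1 \<le> j" "j \<le> k - 1" and g: "valid_gen (k-1) g" "g \<in> {Mu a b, Ga a b}"
  and ab: "a \<noteq> j" "b \<noteq> j" and x: "x \<in> {Mu k j, Ga k j, Ga j k, Mu j k}"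
  shows "CJ x g"
proof (rule viaP4)
  have ab2: "1 \<le> a" "a \<le> k - 1" "1 \<le> b" "b \<le> k - 1" "a \<noteq> b" using g by auto
  have kk: "j < k" "a < k" "b < k" using j ab2 k3 by auto
  show "valid_gen k x" using x j k3 by auto
  show "valid_gen k g" using g valid_gen_mono[of "k-1" k g] by simp
  show "e k x \<in> H" using x H_base[OF j] by auto
  have f0: "e k (Mu a b) \<diamondop> e k (Mu k j) = e k (Mu k j) \<diamondop> e k (Mu a b)"
    by (rule rel2, rule relator.r5) (use j ab ab2 kk in auto)
  have f1: "e k (Mu a b) \<diamondop> e k (Mu j k) = e k (Mu j k) \<diamondop> e k (Mu a b)"
    by (rule rel2, rule relator.r5) (use j ab ab2 kk in auto)
  have f2: "e k (Mu a b) \<diamondop> e k (Ga k j) = e k (Ga k j) \<diamondop> e k (Mu a b)"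
    by (rule rel2, rule relator.r7) (use j ab ab2 kk in auto)
  have f3: "e k (Mu a b) \<diamondop> e k (Ga j k) = e k (Ga j k) \<diamondop> e k (Mu a b)"
    by (rule rel2, rule relator.r7) (use j ab ab2 kk in auto)
  have f4: "e k (Mu k j) \<diamondop> e k (Ga a b) = e k (Ga a b) \<diamondop> e k (Mu k j)"
    by (rule rel2, rule relator.r7) (use j ab ab2 kk in auto)
  have f5: "e k (Mu j k) \<diamondop> e k (Ga a b) = e k (Ga a b) \<diamondop> e k (Mu j k)"
    by (rule rel2, rule relator.r7) (use j ab ab2 kk in auto)
  have f6: "e k (Ga a b) \<diamondop> e k (Ga k j) = e k (Ga k j) \<diamondop> e k (Ga a b)"
    by (rule rel2, rule relator.r6) (use j ab ab2 kk in auto)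
  have f7: "e k (Ga a b) \<diamondop> e k (Ga j k) = e k (Ga j k) \<diamondop> e k (Ga a b)"
    by (rule rel2, rule relator.r6) (use j ab ab2 kk in auto)
  from g(2) x show "e k g \<diamondop> e k x = e k x \<diamondop> e k g"
    using f0 f1 f2 f3 f4 f5 f6 f7 by auto
qed

lemma conjH: assumes j: "1 \<le> j" "j \<le> k - 1" and g: "valid_gen (k-1) g"
  and x: "x \<in> {Mu k j, Ga k j, Ga j k, Mu j k}"
  shows "CJ x g"
proof -
  obtain a b where gab: "g \<in> {Mu a b, Ga a b}" by (cases g) auto
  have ab: "1 \<le> a" "a \<le> k - 1" "1 \<le> b" "b \<le> k - 1" "a \<noteq> b" using g gab by auto
  consider (aj) "a = j" | (bj) "b = j" | (n) "a \<noteq> j" "b \<noteq> j" by blast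
  then show ?thesis
  proof cases
    case aj
    then have bj: "b \<noteq> j" using ab by simp
    from gab x show ?thesis
      apply (elim insertE emptyE)
      apply (simp_all only: aj)
      using C1[OF j ab(3,4) bj] C3[OF j ab(3,4) bj] C5[OF j ab(3,4) bj] C7[OF j ab(3,4) bj]
        C2[OF j ab(3,4) bj] C9[OF j ab(3,4) bj]
        adm_ga[OF j ab(3,4) bj, of "Ga j b" "Ga k j"] adm_ga[OF j ab(3,4) bj, of "Ga j b" "Ga j k"]
      by auto
  next
    case bj
    then have aj: "a \<noteq> j" using ab by simp
    from gab x show ?thesis
      apply (elim insertE emptyE)
      apply (simp_all only: bj)
      using adm_mu[OF j ab(1,2) aj, of "Mu a j"] C4[OF j ab(1,2) aj] C6[OF j ab(1,2) aj]
        C8[OF j ab(1,2) aj] adm_mu[OF j ab(1,2) aj, of "Ga a j"] C9[OF j ab(1,2) aj]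
        adm_ga[OF j ab(1,2) aj, of "Ga a j" "Ga k j"] adm_ga[OF j ab(1,2) aj, of "Ga a j" "Ga j k"]
      by auto
  next
    case n then show ?thesis using comm[OF j g gab n x] by simp
  qed
qed


lemma flip_inj: "flip x = flip y \<Longrightarrow> x = y"
  by (metis flip_flip)

lemma conj_app: "valid_gen k (fst l) \<Longrightarrow>
   wclass k [l] \<diamondop> conj_elt k x w \<diamondop> ii (wclass k [l]) = conj_elt k x (w @ [flip l])"
  using VSPG_inv[of k "[l]"] by (simp add: conj_elt_def VSPG_mult)

lemma extend:
  assumes w: "w \<noteq> []" "valid_word (k-1) w" "reduced w" and l: "valid_gen (k-1) (fst l)"
  shows "\<exists>w'. conj_elt k x (w @ [flip l]) = conj_elt k x w' \<and>
     (w' = [] \<or> (valid_word (k-1) w' \<and> reduced w' \<and> hd w' = hd w))"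
proof (cases "last w = l")
  case True
  define w' where "w' = butlast w"
  have wd: "w = w' @ [l]" using True w(1) unfolding w'_def by (metis append_butlast_last_id)
  have lk: "valid_gen k (fst l)" using l valid_gen_mono[of "k-1" k] by simp
  have e1: "weq k ([] @ l # flip l # (inv_word w' @ [(x, True)] @ w' @ [l, flip l]))
                  ([] @ (inv_word w' @ [(x, True)] @ w' @ [l, flip l]))"
    by (rule weq_cancel'[OF lk])
  have e2: "weq k ((inv_word w' @ [(x, True)] @ w') @ l # flip l # [])
                  ((inv_word w' @ [(x, True)] @ w') @ [])"
    by (rule weq_cancel'[OF lk])
  have "conj_elt k x (w @ [flip l]) = conj_elt k x w'"
    unfolding conj_elt_def wd using e1 e2
    by (intro wclass_eqI) (auto intro: weq.weq_trans)
  moreover have "w' = [] \<or> (valid_word (k-1) w' \<and> reduced w' \<and> hd w' = hd w)"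
  proof (cases "w' = []")
    case False
    have "valid_word (k-1) w'" using w(2) wd by simp
    moreover have "reduced w'" unfolding reduced_def
    proof (intro allI impI)
      fix t assume t: "Suc t < length w'"
      have "w ! Suc t \<noteq> flip (w ! t)" using w(3) t wd unfolding reduced_def by simp
      then show "w' ! Suc t \<noteq> flip (w' ! t)" using t wd by (simp add: nth_append)
    qed
    moreover have "hd w' = hd w" using False wd by simp
    ultimately show ?thesis by blast
  qed simp
  ultimately show ?thesis by blast
next
  case False
  have "valid_word (k-1) (w @ [flip l])" using w(2) l by simp
  moreover have "reduced (w @ [flip l])"
    unfolding reduced_def
  proof (intro allI impI)
    fix t assume t: "Suc t < length (w @ [flip l])"
    show "(w @ [flip l]) ! Suc t \<noteq> flip ((w @ [flip l]) ! t)"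
    proof (cases "Suc t < length w")
      case True then show ?thesis using w(3) unfolding reduced_def by (auto simp: nth_append)
    next
      case c: False
      then have st: "Suc t = length w" using t by simp
      then have "t = length w - 1" by simp
      then have "(w @ [flip l]) ! t = last w" using w(1) st
        by (simp add: nth_append last_conv_nth)
      moreover have "(w @ [flip l]) ! Suc t = flip l" using st by (simp add: nth_append)
      ultimately show ?thesis using False flip_inj by metis
    qed
  qed
  moreover have "hd (w @ [flip l]) = hd w" using w(1) by simp
  ultimately show ?thesis by blast
qed

lemma LC: assumes "valid_gen (k-1) (fst l)" "CJ x (fst l)"
  shows "wclass k [l] \<diamondop> e k x \<diamondop> ii (wclass k [l]) \<in> H"
proof -
  obtain g b where l: "l = (g, b)" by (cases l)
  have vg: "valid_gen k g" using assms(1) l valid_gen_mono[of "k-1" k] by simp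
  show ?thesis
  proof (cases b)
    case True then show ?thesis using assms(2) l unfolding CJ_def e_def by simp
  next
    case False
    have "wclass k [l] = ii (e k g)" using e_inv[OF vg] l False by simp
    then show ?thesis using assms(2) l vg unfolding CJ_def by simp
  qed
qed

lemma LH: assumes "valid_gen k (fst l)" "\<not> valid_gen (k-1) (fst l)"
  shows "wclass k [l] \<in> H"
proof -
  obtain g b where l: "l = (g, b)" by (cases l)
  have "e k g \<in> H"
  proof (cases g)
    case (Mu a c)
    then have h: "1 \<le> a" "a \<le> k" "1 \<le> c" "c \<le> k" "a \<noteq> c" "a = k \<or> c = k" using assms l by auto
    show ?thesis
    proof (cases "a = k")
      case True then show ?thesis using Mu h H_base[of c] by auto
    next
      case False then have "c = k" using h by simp
      then show ?thesis using Mu h H_base[of a] by auto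
    qed
  next
    case (Ga a c)
    then have h: "1 \<le> a" "a \<le> k" "1 \<le> c" "c \<le> k" "a \<noteq> c" "a = k \<or> c = k" using assms l by auto
    show ?thesis
    proof (cases "a = k")
      case True then show ?thesis using Ga h H_base[of c] by auto
    next
      case False then have "c = k" using h by simp
      then show ?thesis using Ga h H_base[of a] by auto
    qed
  qed
  moreover have "valid_gen k g" using assms l by simp
  ultimately show ?thesis using l e_inv[of g] hi[of "e k g"] unfolding e_def by (cases b) auto
qed

definition RP :: "vgen \<Rightarrow> (vgen \<Rightarrow> bool) \<Rightarrow> vword set set" where
  "RP x P = {conj_elt k x w | w. w = [] \<or> (valid_word (k - 1) w \<and> reduced w \<and> P (fst (hd w)))}"

lemma RP_step:
  assumes s: "s \<in> RP x P" and l: "valid_gen (k-1) (fst l)" and x: "CJ x (fst l)"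
    and sub: "RP x P \<subseteq> H"
  shows "wclass k [l] \<diamondop> s \<diamondop> ii (wclass k [l]) \<in> H"
proof -
  obtain w where sw: "s = conj_elt k x w"
    and c: "w = [] \<or> (valid_word (k - 1) w \<and> reduced w \<and> P (fst (hd w)))"
    using s unfolding RP_def by blast
  have lk: "valid_gen k (fst l)" using l valid_gen_mono[of "k-1" k] by simp
  show ?thesis
  proof (cases "w = []")
    case True then show ?thesis using LC[OF l x] sw by (simp add: conj_nil)
  next
    case False
    with c have w: "valid_word (k - 1) w" "reduced w" "P (fst (hd w))" by auto
    obtain w' where w': "conj_elt k x (w @ [flip l]) = conj_elt k x w'"
      "w' = [] \<or> (valid_word (k-1) w' \<and> reduced w' \<and> hd w' = hd w)"
      using extend[OF False w(1,2) l] by blast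
    have "conj_elt k x w' \<in> RP x P" unfolding RP_def using w' w(3) by auto
    then show ?thesis using sub sw conj_app[OF lk] w'(1) by auto
  qed
qed

lemma SL: assumes l: "valid_gen k (fst l)" and s: "s \<in> Sset k"
  shows "wclass k [l] \<diamondop> s \<diamondop> ii (wclass k [l]) \<in> H"
proof (cases "valid_gen (k-1) (fst l)")
  case False
  have L: "wclass k [l] \<in> H" by (rule LH[OF l False])
  show ?thesis using hm[OF hm[OF L hS[OF s]] hi[OF L]] .
next
  case lv: True
  from s consider (a) j where "1 \<le> j" "j \<le> k - 1" "s = e k (Mu j k)"
    | (b) j where "j \<in> {1..k-1}" "s \<in> red_pow_mu k j"
    | (c) j where "j \<in> {1..k-1}" "s \<in> red_pow_ga k (Ga k j) j"
    | (d) j where "j \<in> {1..k-1}" "s \<in> red_pow_ga k (Ga j k) j"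
    unfolding Sset_def e_def by blast
  then show ?thesis
  proof cases
    case (a j) then show ?thesis using LC[OF lv conjH[of j "fst l" "Mu j k"]] lv by simp
  next
    case (b j)
    show ?thesis
    proof (rule RP_step[where x = "Mu k j" and P = "\<lambda>g. \<exists>i. 1 \<le> i \<and> i \<le> k - 1 \<and> i \<noteq> j \<and> g \<in> {Mu i j, Ga i j}"])
      show "s \<in> RP (Mu k j) (\<lambda>g. \<exists>i. 1 \<le> i \<and> i \<le> k - 1 \<and> i \<noteq> j \<and> g \<in> {Mu i j, Ga i j})"
        using b unfolding RP_def red_pow_mu_def by simp
      show "CJ (Mu k j) (fst l)" by (rule conjH) (use b lv in auto)
      show "RP (Mu k j) (\<lambda>g. \<exists>i. 1 \<le> i \<and> i \<le> k - 1 \<and> i \<noteq> j \<and> g \<in> {Mu i j, Ga i j}) \<subseteq> H"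
        using b S_mu hS unfolding RP_def red_pow_mu_def by auto
    qed (rule lv)
  next
    case (c j)
    show ?thesis
    proof (rule RP_step[where x = "Ga k j" and P = "\<lambda>g. \<exists>i. 1 \<le> i \<and> i \<le> k - 1 \<and> i \<noteq> j \<and> g \<in> {Ga i j, Ga j i}"])
      show "s \<in> RP (Ga k j) (\<lambda>g. \<exists>i. 1 \<le> i \<and> i \<le> k - 1 \<and> i \<noteq> j \<and> g \<in> {Ga i j, Ga j i})"
        using c unfolding RP_def red_pow_ga_def by simp
      show "CJ (Ga k j) (fst l)" by (rule conjH) (use c lv in auto)
      show "RP (Ga k j) (\<lambda>g. \<exists>i. 1 \<le> i \<and> i \<le> k - 1 \<and> i \<noteq> j \<and> g \<in> {Ga i j, Ga j i}) \<subseteq> H"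
        using c S_ga1 hS unfolding RP_def red_pow_ga_def by auto
    qed (rule lv)
  next
    case (d j)
    show ?thesis
    proof (rule RP_step[where x = "Ga j k" and P = "\<lambda>g. \<exists>i. 1 \<le> i \<and> i \<le> k - 1 \<and> i \<noteq> j \<and> g \<in> {Ga i j, Ga j i}"])
      show "s \<in> RP (Ga j k) (\<lambda>g. \<exists>i. 1 \<le> i \<and> i \<le> k - 1 \<and> i \<noteq> j \<and> g \<in> {Ga i j, Ga j i})"
        using d unfolding RP_def red_pow_ga_def by simp
      show "CJ (Ga j k) (fst l)" by (rule conjH) (use d lv in auto)
      show "RP (Ga j k) (\<lambda>g. \<exists>i. 1 \<le> i \<and> i \<le> k - 1 \<and> i \<noteq> j \<and> g \<in> {Ga i j, Ga j i}) \<subseteq> H"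
        using d S_ga2 hS unfolding RP_def red_pow_ga_def by auto
    qed (rule lv)
  qed
qed


lemma KL: assumes l: "valid_gen k (fst l)" and h: "h \<in> H"
  shows "wclass k [l] \<diamondop> h \<diamondop> ii (wclass k [l]) \<in> H"
  using h
proof (induct h rule: generate.induct)
  have Lc: "wclass k [l] \<in> C" using l by (intro wclass_carrier) simp
  {
    case one show ?case using Lc generate.one by simp
  next
    case (incl s) show ?case by (rule SL[OF l incl])
  next
    case (inv s)
    have sc: "s \<in> C" using inv S_carrier by auto
    have "ii (wclass k [l] \<diamondop> s \<diamondop> ii (wclass k [l])) = wclass k [l] \<diamondop> ii s \<diamondop> ii (wclass k [l])"
      using Lc sc by (simp add: G.inv_mult_group G.m_assoc)
    then show ?case using hi[OF SL[OF l inv]] by simp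
  next
    case (eng h1 h2)
    have c: "h1 \<in> C" "h2 \<in> C" using eng(1,3) G.generate_in_carrier[OF S_carrier] by auto
    have "wclass k [l] \<diamondop> (h1 \<diamondop> h2) \<diamondop> ii (wclass k [l]) =
          (wclass k [l] \<diamondop> h1 \<diamondop> ii (wclass k [l])) \<diamondop> (wclass k [l] \<diamondop> h2 \<diamondop> ii (wclass k [l]))"
      using Lc c by (simp add: G.m_assoc)
    then show ?case using hm[OF eng(2,4)] by simp
  }
qed

lemma H_normal: "H \<lhd> VSPG k"
  unfolding G.normal_inv_iff
proof (intro conjI ballI)
  show "subgroup H (VSPG k)" by (rule H_sub)
next
  fix x h assume x: "x \<in> C" and h: "h \<in> H"
  obtain w where w: "x = wclass k w" "valid_word k w" using x by (auto simp: VSPG_carrier)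
  have "\<forall>h\<in>H. wclass k w \<diamondop> h \<diamondop> ii (wclass k w) \<in> H" using w(2)
  proof (induction w)
    case Nil
    show ?case using G.generate_in_carrier[OF S_carrier] by (auto simp: VSPG_one[symmetric])
  next
    case (Cons l w)
    have lv: "valid_gen k (fst l)" "valid_word k w" using Cons.prems by auto
    have Lc: "wclass k [l] \<in> C" "wclass k w \<in> C" using lv by (auto intro!: wclass_carrier)
    have split: "wclass k (l # w) = wclass k [l] \<diamondop> wclass k w" by (simp add: VSPG_mult)
    show ?case
    proof
      fix h assume h: "h \<in> H"
      have hc: "h \<in> C" using h G.generate_in_carrier[OF S_carrier] by auto
      have "wclass k (l # w) \<diamondop> h \<diamondop> ii (wclass k (l # w)) =
            wclass k [l] \<diamondop> (wclass k w \<diamondop> h \<diamondop> ii (wclass k w)) \<diamondop> ii (wclass k [l])"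
        unfolding split using Lc hc by (simp add: G.inv_mult_group G.m_assoc)
      then show "wclass k (l # w) \<diamondop> h \<diamondop> ii (wclass k (l # w)) \<in> H"
        using KL[OF lv(1)] Cons.IH[OF lv(2)] h by simp
    qed
  qed
  then show "x \<diamondop> h \<diamondop> ii x \<in> H" using w h by simp
qed

lemma VS_gens: "1 \<le> j \<Longrightarrow> j \<le> k - 1 \<Longrightarrow> g \<in> {Mu j k, Mu k j, Ga j k, Ga k j} \<Longrightarrow> e k g \<in> VS k"
  unfolding VS_def e_def by (rule generate.incl) blast

lemma VS_sub_H: "VS k \<subseteq> H"
  unfolding VS_def
proof (rule G.generate_subgroup_incl[OF _ H_sub])
  show "{wclass k [(g, True)] |g j. 1 \<le> j \<and> j \<le> k - 1 \<and> g \<in> {Mu j k, Mu k j, Ga j k, Ga k j}} \<subseteq> H"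
    using H_base unfolding e_def by blast
qed

lemma S_in_normal: assumes N: "N \<lhd> VSPG k" "VS k \<subseteq> N" shows "Sset k \<subseteq> N"
proof
  fix s assume s: "s \<in> Sset k"
  then show "s \<in> N"
  proof (cases rule: S_cases)
    case (A j) then show ?thesis using VS_gens[of j] N(2) by auto
  next
    case (B j w x)
    have xv: "valid_gen k x" using B x_valid[of j] by auto
    have wv: "valid_word k w" using B(5) valid_word_mono[of "k-1" k w] by simp
    have Wc: "ii (wclass k w) \<in> C" using wv by (intro G.inv_closed wclass_carrier)
    have "e k x \<in> N" using VS_gens[of j x] B N(2) by auto
    then have "ii (wclass k w) \<diamondop> e k x \<diamondop> ii (ii (wclass k w)) \<in> N"
      using G.normal_invE(2)[OF N(1) Wc] by blast
    moreover have "ii (wclass k w) \<diamondop> e k x \<diamondop> ii (ii (wclass k w)) = conj_elt k x w"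
      using wv by (simp add: VSPG_inv wclass_carrier conj_elt_def e_def VSPG_mult)
    ultimately show ?thesis using B(3) by simp
  qed
qed

lemma main: "VS_star k = H"
proof
  show "VS_star k \<subseteq> H"
    unfolding VS_star_def normal_closure_def using H_normal VS_sub_H by blast
next
  show "H \<subseteq> VS_star k"
    unfolding VS_star_def normal_closure_def
  proof (rule Inter_greatest)
    fix N assume "N \<in> {N. N \<lhd> VSPG k \<and> VS k \<subseteq> N}"
    then have N: "N \<lhd> VSPG k" "VS k \<subseteq> N" by auto
    show "H \<subseteq> N"
      by (rule G.generate_subgroup_incl[OF S_in_normal[OF N] normal_imp_subgroup[OF N(1)]])
  qed
qed

end

theorem mainTheorem11:
  fixes k n :: nat
  assumes "3 \<le> k" and "k \<le> n"
  shows "VS_star k = generate (VSPG k)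
           ({wclass k [(Mu j k, True)] | j. 1 \<le> j \<and> j \<le> k - 1}
            \<union> (\<Union>j\<in>{1..k-1}. red_pow_mu k j \<union> red_pow_ga k (Ga k j) j \<union> red_pow_ga k (Ga j k) j))"
  using vs.main[of k] assms unfolding vs_def Sset_def by simp

end
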